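(* Let $\mathcal{U}$ and $\mathcal{A}$ be separable Banach spaces with duals $\mathcal{U}^*,\mathcal{A}^*$ and pairings $[\cdot,\cdot]_{\mathcal{U}},[\cdot,\cdot]_{\mathcal{A}}$, with quadratic norms $\|u\|_{\mathcal{U}}^2=[\mathcal{K}^{-1}u,u]_{\mathcal{U}}$, $\|a\|_{\mathcal{A}}^2=[\mathcal{S}^{-1}a,a]_{\mathcal{A}}$ given by invertible symmetric positive linear maps $\mathcal{K}:\mathcal{U}^*\to\mathcal{U}$, $\mathcal{S}:\mathcal{A}^*\to\mathcal{A}$. Let $\Omega\subseteq\mathbb{R}^d$ be bounded and consider the parametric PDE $\mathcal{P}(u;a)(\mathbf{x})=f(\mathbf{x})$ on $\Omega$, $\mathcal{B}(u;a)(\mathbf{x})=g(\mathbf{x})$ on $\partial\Omega$, where (Assumption) there exist bounded linear $L_1,\dots,L_Q\in\mathcal{L}(\mathcal{U};C(\Omega))$ with $L_1,\dots,L_{Q_b}\in\mathcal{L}(\mathcal{U};C(\partial\Omega))$ ($1\le Q_b\le Q$), bounded linear $\widetilde{L}_1,\dots,\widetilde{L}_J\in\mathcal{L}(\mathcal{A};C(\overline{\Omega}))$, and maps $P:\mathbb{R}^{Q+J}\to\mathbb{R}$, $B:\mathbb{R}^{Q_b+J}\to\mathbb{R}$ with $\mathcal{P}(u;a)(\mathbf{x})=P(L_1(u)(\mathbf{x}),\dots,L_Q(u)(\mathbf{x});\widetilde{L}_1(a)(\mathbf{x}),\dots,\widetilde{L}_J(a)(\mathbf{x}))$ on $\Omega$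 and $\mathcal{B}(u;a)(\mathbf{x})=B(L_1(u)(\mathbf{x}),\dots,L_{Q_b}(u)(\mathbf{x});\widetilde{L}_1(a)(\mathbf{x}),\dots,\widetilde{L}_J(a)(\mathbf{x}))$ on $\partial\Omega$. Let $\psi_1,\dots,\psi_I\in\mathcal{U}^*$, $\boldsymbol{\psi}=(\psi_1,\dots,\psi_I)$, $\mathbf{o}\in\mathbb{R}^I$, $\gamma\ne0$. With the objects in the context, assume $\Theta$ and $\widetilde{\Theta}$ are invertible. Then $(u^\dagger,a^\dagger)\in\mathcal{U}\times\mathcal{A}$ is a minimizer of $$\min_{(u,a)\in\mathcal{U}\times\mathcal{A}}\ \|u\|_{\mathcal{U}}^2+\|a\|_{\mathcal{A}}^2+\frac{1}{\gamma^2}|[\boldsymbol{\psi},u]-\mathbf{o}|^2\ \text{ s.t. }\ \mathcal{P}(u;a)(\mathbf{x}_m)=f(\mathbf{x}_m),\ 1\le m\le M_\Omega;\ \mathcal{B}(u;a)(\mathbf{x}_m)=g(\mathbf{x}_m),\ M_\Omega<m\le M$$ if and only if $u^\dagger=\sum_{n=1}^{I+N}z^\dagger_n\chi_n$ and $a^\dagger=\sum_{n=1}^{\widetilde{N}}\widetilde{z}^\dagger_n\widetilde{\chi}_n$, where $(\mathbf{z}^\dagger,\widetilde{\mathbf{z}}^\dagger)$ is a minimizer of $$\min_{(\mathbf{z},\widetilde{\mathbf{z}})\in\mathbb{R}^{I+N}\times\mathbb{R}^{\widetilde{N}}}\ \mathbf{z}^T\Theta^{-1}\mathbf{z}+\widetilde{\mathbf{z}}^T\widetilde{\Theta}^{-1}\widetilde{\mathbf{z}}+\frac{1}{\gamma^2}|\Pi^I\mathbf{z}-\mathbf{o}|^2\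 \text{ s.t. }\ F(\Pi_N\mathbf{z};\widetilde{\mathbf{z}})=\mathbf{y}.$$
   Context: Collocation points $\mathbf{x}_1,\dots,\mathbf{x}_{M_\Omega}\in\Omega$, $\mathbf{x}_{M_\Omega+1},\dots,\mathbf{x}_M\in\partial\Omega$. $\phi^{(q)}_m=\delta_{\mathbf{x}_m}\circ L_q\in\mathcal{U}^*$ for $1\le m\le M$ if $q\le Q_b$, for $1\le m\le M_\Omega$ if $q>Q_b$; $\boldsymbol{\phi}=(\boldsymbol{\phi}^{(1)},\dots,\boldsymbol{\phi}^{(Q)})$ with $N=MQ_b+M_\Omega(Q-Q_b)$ entries. $\widetilde{\phi}^{(j)}_m=\delta_{\mathbf{x}_m}\circ\widetilde{L}_j\in\mathcal{A}^*$ for $m=1,\dots,M$, $j=1,\dots,J$; $\widetilde{\boldsymbol{\phi}}=(\widetilde{\boldsymbol{\phi}}^{(1)},\dots,\widetilde{\boldsymbol{\phi}}^{(J)})$ with $\widetilde{N}=MJ$ entries. $\boldsymbol{\varphi}=(\varphi_1,\dots,\varphi_{I+N})$ with $\varphi_n=\psi_n$ for $n\le I$ and $\varphi_n=\phi_{n-I}$ for $n>I$ (the $\phi_k$ being the entries of $\boldsymbol{\phi}$). $\Theta_{i,n}=[\varphi_i,\mathcal{K}\varphi_n]_{\mathcal{U}}$, $\widetilde{\Theta}_{i,n}=[\widetilde{\phi}_i,\mathcal{S}\widetilde{\phi}_n]_{\mathcal{A}}$; $\chi_i=\sum_{n=1}^{N+I}(\Theta^{-1})_{i,n}\mathcal{K}\varphi_n$,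 $\widetilde{\chi}_i=\sum_{n=1}^{\widetilde{N}}(\widetilde{\Theta}^{-1})_{i,n}\mathcal{S}\widetilde{\phi}_n$. $y_m=f(\mathbf{x}_m)$ for $m\le M_\Omega$, $g(\mathbf{x}_m)$ otherwise. $F$ is defined by $(F([\boldsymbol{\phi},u]_{\mathcal{U}};[\widetilde{\boldsymbol{\phi}},a]_{\mathcal{A}}))_m=P([\phi^{(1)}_m,u]_{\mathcal{U}},\dots,[\phi^{(Q)}_m,u]_{\mathcal{U}};[\widetilde{\phi}^{(1)}_m,a]_{\mathcal{A}},\dots,[\widetilde{\phi}^{(J)}_m,a]_{\mathcal{A}})$ for $m\le M_\Omega$ and $B([\phi^{(1)}_m,u]_{\mathcal{U}},\dots,[\phi^{(Q_b)}_m,u]_{\mathcal{U}};[\widetilde{\phi}^{(1)}_m,a]_{\mathcal{A}},\dots,[\widetilde{\phi}^{(J)}_m,a]_{\mathcal{A}})$ for $m>M_\Omega$ (so $F$ is a map on vectors in $\mathbb{R}^N\times\mathbb{R}^{\widetilde{N}}$). $\Pi^I:\mathbb{R}^{I+N}\to\mathbb{R}^I$ extracts the first $I$ entries, $\Pi_N:\mathbb{R}^{I+N}\to\mathbb{R}^N$ the last $N$ entries. *)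

theory Defs
  imports "HOL-Analysis.Analysis"
begin

text \<open>Finite square matrices of size n are represented as functions nat => nat => real,
  only the entries with indices below n being relevant (0-based indexing).\<close>

definition is_sq_inverse :: "nat \<Rightarrow> (nat \<Rightarrow> nat \<Rightarrow> real) \<Rightarrow> (nat \<Rightarrow> nat \<Rightarrow> real) \<Rightarrow> bool" where
  "is_sq_inverse n A B \<longleftrightarrow>
     (\<forall>i<n. \<forall>k<n. (\<Sum>j<n. A i j * B j k) = (if i = k then 1 else 0)) \<and>
     (\<forall>i<n. \<forall>k<n. (\<Sum>j<n. B i j * A j k) = (if i = k then 1 else 0))"

definition invertible_sq :: "nat \<Rightarrow> (nat \<Rightarrow> nat \<Rightarrow> real) \<Rightarrow> bool" where
  "invertible_sq n A \<longleftrightarrow> (\<exists>B. is_sq_inverse n A B)"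

definition sq_inv :: "nat \<Rightarrow> (nat \<Rightarrow> nat \<Rightarrow> real) \<Rightarrow> (nat \<Rightarrow> nat \<Rightarrow> real)" where
  "sq_inv n A = (SOME B. is_sq_inverse n A B)"

definition qform :: "nat \<Rightarrow> (nat \<Rightarrow> nat \<Rightarrow> real) \<Rightarrow> (nat \<Rightarrow> real) \<Rightarrow> real" where
  "qform n A z = (\<Sum>i<n. \<Sum>k<n. z i * A i k * z k)"


definition coll_phi :: "(nat \<Rightarrow> 'u::real_normed_vector \<Rightarrow> 'x \<Rightarrow> real) \<Rightarrow> (nat \<Rightarrow> 'x) \<Rightarrow> nat \<Rightarrow> nat \<Rightarrow> ('u \<Rightarrow>\<^sub>L real)" where
  "coll_phi L xs q m = Blinfun (\<lambda>u. L q u (xs m))"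

definition blk :: "nat \<Rightarrow> nat \<Rightarrow> nat \<Rightarrow> nat \<Rightarrow> nat" where
  "blk Qb M MO q = (if q < Qb then M else MO)"

definition off :: "nat \<Rightarrow> nat \<Rightarrow> nat \<Rightarrow> nat \<Rightarrow> nat" where
  "off Qb M MO q = (\<Sum>q'<q. blk Qb M MO q')"

definition Ncount :: "nat \<Rightarrow> nat \<Rightarrow> nat \<Rightarrow> nat \<Rightarrow> nat" where
  "Ncount Q Qb M MO = M * Qb + MO * (Q - Qb)"

definition phi_vec :: "(nat \<Rightarrow> 'u::real_normed_vector \<Rightarrow> 'x \<Rightarrow> real) \<Rightarrow> (nat \<Rightarrow> 'x) \<Rightarrow> nat \<Rightarrow> nat \<Rightarrow> nat \<Rightarrow> nat \<Rightarrow> ('u \<Rightarrow>\<^sub>L real) list" where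
  "phi_vec L xs Q Qb M MO = concat (map (\<lambda>q. map (coll_phi L xs q) [0..<blk Qb M MO q]) [0..<Q])"

definition phit_vec :: "(nat \<Rightarrow> 'a::real_normed_vector \<Rightarrow> 'x \<Rightarrow> real) \<Rightarrow> (nat \<Rightarrow> 'x) \<Rightarrow> nat \<Rightarrow> nat \<Rightarrow> ('a \<Rightarrow>\<^sub>L real) list" where
  "phit_vec Lt xs J M = concat (map (\<lambda>j. map (coll_phi Lt xs j) [0..<M]) [0..<J])"

definition varphi :: "(nat \<Rightarrow> 'u::real_normed_vector \<Rightarrow>\<^sub>L real) \<Rightarrow> nat \<Rightarrow> ('u \<Rightarrow>\<^sub>L real) list \<Rightarrow> nat \<Rightarrow> ('u \<Rightarrow>\<^sub>L real)" where
  "varphi \<psi> I phiv n = (if n < I then \<psi> n else phiv ! (n - I))"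

definition gram :: "(('u::real_normed_vector \<Rightarrow>\<^sub>L real) \<Rightarrow> 'u) \<Rightarrow> (nat \<Rightarrow> ('u \<Rightarrow>\<^sub>L real)) \<Rightarrow> nat \<Rightarrow> nat \<Rightarrow> real" where
  "gram K v i n = blinfun_apply (v i) (K (v n))"

definition gamblet :: "nat \<Rightarrow> (('u::real_normed_vector \<Rightarrow>\<^sub>L real) \<Rightarrow> 'u) \<Rightarrow> (nat \<Rightarrow> ('u \<Rightarrow>\<^sub>L real)) \<Rightarrow> nat \<Rightarrow> 'u" where
  "gamblet n0 K v i = (\<Sum>n<n0. sq_inv n0 (gram K v) i n *\<^sub>R K (v n))"

definition ydata :: "('x \<Rightarrow> real) \<Rightarrow> ('x \<Rightarrow> real) \<Rightarrow> (nat \<Rightarrow> 'x) \<Rightarrow> nat \<Rightarrow> nat \<Rightarrow> real" where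
  "ydata f g xs MO m = (if m < MO then f (xs m) else g (xs m))"

text \<open>The map F on R^N x R^Nt: the entry [phi^(q)_m,u] sits at position off q + m of w,
  the entry [phit^(j)_m,a] at position j*M + m of wt.\<close>
definition Fmap :: "(real list \<Rightarrow> real list \<Rightarrow> real) \<Rightarrow> (real list \<Rightarrow> real list \<Rightarrow> real) \<Rightarrow> nat \<Rightarrow> nat \<Rightarrow> nat \<Rightarrow> nat \<Rightarrow> nat
     \<Rightarrow> (nat \<Rightarrow> real) \<Rightarrow> (nat \<Rightarrow> real) \<Rightarrow> nat \<Rightarrow> real" where
  "Fmap P B Q Qb J M MO w wt m =
     (if m < MO then P (map (\<lambda>q. w (off Qb M MO q + m)) [0..<Q]) (map (\<lambda>j. wt (j * M + m)) [0..<J])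
      else B (map (\<lambda>q. w (off Qb M MO q + m)) [0..<Qb]) (map (\<lambda>j. wt (j * M + m)) [0..<J]))"

end

theory Submission
  imports Defs
begin

lemma sq_inv_prop: "invertible_sq n A \<Longrightarrow> is_sq_inverse n A (sq_inv n A)"
  unfolding invertible_sq_def sq_inv_def by (metis someI_ex)

lemma bl_from: fixes h :: "'u::real_normed_vector \<Rightarrow> real"
  assumes "linear h" "\<forall>u. \<bar>h u\<bar> \<le> C * norm u" shows "bounded_linear h"
proof (rule bounded_linear_intro[where K=C])
  show "h (x + y) = h x + h y" for x y using assms(1) by (simp add: linear_add)
  show "h (r *\<^sub>R x) = r *\<^sub>R h x" for r x using assms(1) by (simp add: linear_scale)
  show "norm (h x) \<le> norm x * C" for x using assms(2) by (simp add: mult.commute)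
qed

lemma gamblet_core:
  fixes K :: "('u::real_normed_vector \<Rightarrow>\<^sub>L real) \<Rightarrow> 'u" and v :: "nat \<Rightarrow> ('u \<Rightarrow>\<^sub>L real)"
  assumes Kb: "bij K"
    and Ks: "\<forall>\<phi> \<phi>'. blinfun_apply \<phi> (K \<phi>') = blinfun_apply \<phi>' (K \<phi>)"
    and nU: "\<forall>u. (norm u)^2 = blinfun_apply (inv K u) u"
    and Tinv: "invertible_sq n0 (gram K v)"
  shows "\<And>z i. i < n0 \<Longrightarrow> blinfun_apply (v i) (\<Sum>n<n0. z n *\<^sub>R gamblet n0 K v n) = z i"
    and "\<And>z. (norm (\<Sum>n<n0. z n *\<^sub>R gamblet n0 K v n))^2 = qform n0 (sq_inv n0 (gram K v)) z"
    and "\<And>u. (norm u)^2 = (norm (\<Sum>n<n0. blinfun_apply (v n) u *\<^sub>R gamblet n0 K v n))^2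
               + (norm (u - (\<Sum>n<n0. blinfun_apply (v n) u *\<^sub>R gamblet n0 K v n)))^2"
proof -
  define Ti where "Ti = sq_inv n0 (gram K v)"
  define rec where "rec z = (\<Sum>n<n0. z n *\<^sub>R gamblet n0 K v n)" for z
  define ip where "ip u w = blinfun_apply (inv K u) w" for u w
  have KinvK: "K (inv K u) = u" for u using Kb by (simp add: bij_is_surj surj_f_inv_f)
  have ipK: "ip u (K \<phi>) = blinfun_apply \<phi> u" for u \<phi>
  proof -
    have "ip u (K \<phi>) = blinfun_apply \<phi> (K (inv K u))" unfolding ip_def using Ks by blast
    then show ?thesis by (simp add: KinvK)
  qed
  have ipsym: "ip u w = ip w u" for u w
  proof -
    have "ip u w = ip u (K (inv K w))" by (simp add: KinvK)
    also have "\<dots> = blinfun_apply (inv K w) u" by (rule ipK)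
    also have "\<dots> = ip w u" by (simp add: ip_def)
    finally show ?thesis .
  qed
  have ipadd2: "ip u (a + b) = ip u a + ip u b" for u a b unfolding ip_def by (simp add: blinfun.add_right)
  have ipdiff2: "ip u (a - b) = ip u a - ip u b" for u a b unfolding ip_def by (simp add: blinfun.diff_right)
  have ipsum2: "ip u (\<Sum>n<n0. c n *\<^sub>R a n) = (\<Sum>n<n0. c n * ip u (a n))" for u c a
    unfolding ip_def by (simp add: blinfun.sum_right blinfun.scaleR_right)
  have nip: "(norm u)^2 = ip u u" for u using nU ip_def by simp
  have inv: "is_sq_inverse n0 (gram K v) Ti" using sq_inv_prop[OF Tinv] Ti_def by simp
  have Tsym: "gram K v i k = gram K v k i" for i k unfolding gram_def using Ks by metis
  have gam: "gamblet n0 K v n = (\<Sum>k<n0. Ti n k *\<^sub>R K (v k))" for n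
    unfolding gamblet_def Ti_def by simp
  have vchi: "blinfun_apply (v i) (gamblet n0 K v n) = (if n = i then 1 else 0)" if "i<n0" "n<n0" for i n
  proof -
    have "blinfun_apply (v i) (gamblet n0 K v n) = (\<Sum>k<n0. Ti n k * gram K v i k)"
      unfolding gam gram_def by (simp add: blinfun.sum_right blinfun.scaleR_right)
    also have "\<dots> = (\<Sum>k<n0. Ti n k * gram K v k i)" using Tsym by metis
    also have "\<dots> = (if n = i then 1 else 0)" using inv that unfolding is_sq_inverse_def by blast
    finally show ?thesis .
  qed
  show meas: "blinfun_apply (v i) (rec z) = z i" if "i < n0" for z i
  proof -
    have "blinfun_apply (v i) (rec z) = (\<Sum>n<n0. z n * (if n = i then 1 else 0))"
      unfolding rec_def using vchi that by (simp add: blinfun.sum_right blinfun.scaleR_right)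
    also have "\<dots> = z i" using that by (simp add: if_distrib cong: if_cong)
    finally show ?thesis .
  qed
  have ipchi: "ip w (gamblet n0 K v n) = (\<Sum>k<n0. Ti n k * blinfun_apply (v k) w)" for w n
    unfolding gam using ipsum2[of w "Ti n" "\<lambda>k. K (v k)"] ipK by simp
  have iprec: "ip w (rec z) = (\<Sum>n<n0. z n * (\<Sum>k<n0. Ti n k * blinfun_apply (v k) w))" for w z
    unfolding rec_def ipsum2 ipchi by simp
  show "(norm (rec z))^2 = qform n0 Ti z" for z
  proof -
    have "(norm (rec z))^2 = (\<Sum>n<n0. z n * (\<Sum>k<n0. Ti n k * z k))"
      unfolding nip iprec using meas by simp
    also have "\<dots> = qform n0 Ti z" unfolding qform_def
      by (simp add: sum_distrib_left mult.assoc)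
    finally show ?thesis .
  qed
  show "(norm u)^2 = (norm (rec (\<lambda>n. blinfun_apply (v n) u)))^2 + (norm (u - rec (\<lambda>n. blinfun_apply (v n) u)))^2" for u
  proof -
    define r where "r = rec (\<lambda>n. blinfun_apply (v n) u)"
    define w where "w = u - r"
    have vw: "blinfun_apply (v k) w = 0" if "k < n0" for k
      unfolding w_def r_def using meas[OF that] by (simp add: blinfun.diff_right)
    have o: "ip w r = 0" unfolding r_def iprec using vw by simp
    have u: "u = r + w" unfolding w_def by simp
    have "ip u u = ip r r + 2 * ip w r + ip w w"
      unfolding u ipadd2 using ipsym[of "r + w"] ipadd2 ipsym by (simp add: algebra_simps)
    then show ?thesis using o nip unfolding r_def[symmetric] w_def[symmetric] by simp
  qed
qed

lemma blocks_len: "length (concat (map (\<lambda>q. map (h q) [0..<b q]) [0..<Q])) = (\<Sum>q<Q. b q)"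
  by (induction Q) auto

lemma blocks_bound: fixes q Q m :: nat and b :: "nat \<Rightarrow> nat" assumes "q < Q" "m < b q" shows "(\<Sum>q'<q. b q') + m < (\<Sum>q'<Q. b q')"
proof -
  have "(\<Sum>q'<q. b q') + m < (\<Sum>q'<Suc q. b q')" using assms by simp
  also have "\<dots> \<le> (\<Sum>q'<Q. b q')" using assms by (intro sum_mono2) auto
  finally show ?thesis .
qed

lemma blocks_nth: fixes q Q m :: nat and b :: "nat \<Rightarrow> nat" assumes "q < Q" "m < b q"
  shows "concat (map (\<lambda>q. map (h q) [0..<b q]) [0..<Q]) ! ((\<Sum>q'<q. b q') + m) = h q m"
  using assms
proof (induction Q)
  case 0 then show ?case by simp
next
  case (Suc Q)
  show ?case
  proof (cases "q < Q")
    case True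
    have "(\<Sum>q'<q. b q') + m < length (concat (map (\<lambda>q. map (h q) [0..<b q]) [0..<Q]))"
      unfolding blocks_len using blocks_bound[of q Q m b, OF True Suc.prems(2)] .
    then show ?thesis using Suc True by (simp add: nth_append)
  next
    case False
    then have "q = Q" using Suc by simp
    then show ?thesis using Suc.prems blocks_len[of h b Q] by (simp add: nth_append)
  qed
qed

lemma blk_sum: "(\<Sum>q<Q. blk Qb M MO q) = M * min Q Qb + MO * (Q - Qb)"
proof (induction Q)
  case 0 then show ?case by simp
next
  case (Suc Q)
  show ?case
  proof (cases "Q < Qb")
    case True
    then have "min (Suc Q) Qb = Suc Q" "min Q Qb = Q" "Suc Q - Qb = 0" "Q - Qb = 0" by auto
    then show ?thesis using Suc True by (simp add: blk_def)
  next
    case False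
    then have "min (Suc Q) Qb = Qb" "min Q Qb = Qb" "Suc Q - Qb = Suc (Q - Qb)" by auto
    then show ?thesis using Suc False by (simp add: blk_def)
  qed
qed

lemma argmin_pair: "is_arg_min (\<lambda>(x, y). F x y) (\<lambda>(x, y). C x y) (a, b) \<longleftrightarrow> C a b \<and> (\<forall>x y. C x y \<longrightarrow> \<not> F x y < F a b)"
  unfolding is_arg_min_def by auto

theorem corollary4p4:
  fixes K :: "('u::banach \<Rightarrow>\<^sub>L real) \<Rightarrow> 'u"
    and S :: "('a::banach \<Rightarrow>\<^sub>L real) \<Rightarrow> 'a"
    and \<Omega> :: "'x::euclidean_space set"
    and xs :: "nat \<Rightarrow> 'x" and M MO :: nat
    and L :: "nat \<Rightarrow> 'u \<Rightarrow> 'x \<Rightarrow> real" and Q Qb :: nat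
    and Lt :: "nat \<Rightarrow> 'a \<Rightarrow> 'x \<Rightarrow> real" and J :: nat
    and Pop :: "'u \<Rightarrow> 'a \<Rightarrow> 'x \<Rightarrow> real" and Bop :: "'u \<Rightarrow> 'a \<Rightarrow> 'x \<Rightarrow> real"
    and P :: "real list \<Rightarrow> real list \<Rightarrow> real" and B :: "real list \<Rightarrow> real list \<Rightarrow> real"
    and f g :: "'x \<Rightarrow> real"
    and \<psi> :: "nat \<Rightarrow> ('u \<Rightarrow>\<^sub>L real)" and I :: nat
    and obs :: "nat \<Rightarrow> real" and \<gamma> :: real
    and ud :: 'u and ad :: 'a
  assumes sepU: "\<exists>D::'u set. countable D \<and> closure D = UNIV"
    and sepA: "\<exists>D::'a set. countable D \<and> closure D = UNIV"
    and K_lin: "linear K" and K_bij: "bij K"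
    and K_sym: "\<forall>\<phi> \<phi>'. blinfun_apply \<phi> (K \<phi>') = blinfun_apply \<phi>' (K \<phi>)"
    and K_pos: "\<forall>\<phi>. \<phi> \<noteq> 0 \<longrightarrow> blinfun_apply \<phi> (K \<phi>) > 0"
    and normU: "\<forall>u. (norm u)^2 = blinfun_apply (inv K u) u"
    and S_lin: "linear S" and S_bij: "bij S"
    and S_sym: "\<forall>\<phi> \<phi>'. blinfun_apply \<phi> (S \<phi>') = blinfun_apply \<phi>' (S \<phi>)"
    and S_pos: "\<forall>\<phi>. \<phi> \<noteq> 0 \<longrightarrow> blinfun_apply \<phi> (S \<phi>) > 0"
    and normA: "\<forall>a. (norm a)^2 = blinfun_apply (inv S a) a"
    and \<Omega>_bdd: "bounded \<Omega>"
    and MO_le: "MO \<le> M"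
    and xs_int: "\<forall>m<MO. xs m \<in> \<Omega>"
    and xs_bd: "\<forall>m. MO \<le> m \<and> m < M \<longrightarrow> xs m \<in> frontier \<Omega>"
    and Qb_ge: "1 \<le> Qb" and Qb_le: "Qb \<le> Q"
    and L_Omega: "\<forall>q<Q. (\<forall>x\<in>\<Omega>. linear (\<lambda>u. L q u x)) \<and> (\<forall>u. continuous_on \<Omega> (L q u))
                    \<and> (\<exists>C. \<forall>u. \<forall>x\<in>\<Omega>. \<bar>L q u x\<bar> \<le> C * norm u)"
    and L_bdry: "\<forall>q<Qb. (\<forall>x\<in>frontier \<Omega>. linear (\<lambda>u. L q u x)) \<and> (\<forall>u. continuous_on (frontier \<Omega>) (L q u))
                    \<and> (\<exists>C. \<forall>u. \<forall>x\<in>frontier \<Omega>. \<bar>L q u x\<bar> \<le> C * norm u)"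
    and Lt_cl: "\<forall>j<J. (\<forall>x\<in>closure \<Omega>. linear (\<lambda>a. Lt j a x)) \<and> (\<forall>a. continuous_on (closure \<Omega>) (Lt j a))
                    \<and> (\<exists>C. \<forall>a. \<forall>x\<in>closure \<Omega>. \<bar>Lt j a x\<bar> \<le> C * norm a)"
    and Pop_eq: "\<forall>u a. \<forall>x\<in>\<Omega>. Pop u a x = P (map (\<lambda>q. L q u x) [0..<Q]) (map (\<lambda>j. Lt j a x) [0..<J])"
    and Bop_eq: "\<forall>u a. \<forall>x\<in>frontier \<Omega>. Bop u a x = B (map (\<lambda>q. L q u x) [0..<Qb]) (map (\<lambda>j. Lt j a x) [0..<J])"
    and \<gamma>_nz: "\<gamma> \<noteq> 0"
    and \<Theta>_inv: "invertible_sq (I + Ncount Q Qb M MO)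
                    (gram K (varphi \<psi> I (phi_vec L xs Q Qb M MO)))"
    and \<Theta>t_inv: "invertible_sq (M * J) (gram S (\<lambda>n. phit_vec Lt xs J M ! n))"
  shows "is_arg_min
           (\<lambda>(u, a). (norm u)^2 + (norm a)^2 + (1 / \<gamma>^2) * (\<Sum>i<I. (blinfun_apply (\<psi> i) u - obs i)^2))
           (\<lambda>(u, a). (\<forall>m<MO. Pop u a (xs m) = f (xs m)) \<and> (\<forall>m. MO \<le> m \<and> m < M \<longrightarrow> Bop u a (xs m) = g (xs m)))
           (ud, ad)
         \<longleftrightarrow>
         (\<exists>zd ztd. is_arg_min
              (\<lambda>(z, zt). qform (I + Ncount Q Qb M MO) (sq_inv (I + Ncount Q Qb M MO) (gram K (varphi \<psi> I (phi_vec L xs Q Qb M MO)))) z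
                          + qform (M * J) (sq_inv (M * J) (gram S (\<lambda>n. phit_vec Lt xs J M ! n))) zt
                          + (1 / \<gamma>^2) * (\<Sum>i<I. (z i - obs i)^2))
              (\<lambda>(z, zt). (\<forall>n. I + Ncount Q Qb M MO \<le> n \<longrightarrow> z n = 0) \<and> (\<forall>n. M * J \<le> n \<longrightarrow> zt n = 0)
                          \<and> (\<forall>m<M. Fmap P B Q Qb J M MO (\<lambda>k. z (I + k)) zt m = ydata f g xs MO m))
              (zd, ztd)
            \<and> ud = (\<Sum>n<I + Ncount Q Qb M MO. zd n *\<^sub>R gamblet (I + Ncount Q Qb M MO) K (varphi \<psi> I (phi_vec L xs Q Qb M MO)) n)
            \<and> ad = (\<Sum>n<M * J. ztd n *\<^sub>R gamblet (M * J) S (\<lambda>n. phit_vec Lt xs J M ! n) n))"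
proof -
  define N0 where "N0 = I + Ncount Q Qb M MO"
  define v where "v = varphi \<psi> I (phi_vec L xs Q Qb M MO)"
  define Nt where "Nt = M * J"
  define vt where "vt = (\<lambda>n. phit_vec Lt xs J M ! n)"
  define Ti where "Ti = sq_inv N0 (gram K v)"
  define Tti where "Tti = sq_inv Nt (gram S vt)"
  define rec where "rec z = (\<Sum>n<N0. z n *\<^sub>R gamblet N0 K v n)" for z
  define recT where "recT z = (\<Sum>n<Nt. z n *\<^sub>R gamblet Nt S vt n)" for z
  define meas where "meas u = (\<lambda>n. if n < N0 then blinfun_apply (v n) u else 0)" for u
  define measT where "measT a = (\<lambda>n. if n < Nt then blinfun_apply (vt n) a else 0)" for a
  define c where "c = 1 / \<gamma>^2"
  define D where "D z = (\<Sum>i<I. (z i - obs i)^2)" for z :: "nat \<Rightarrow> real"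
  define Ji where "Ji u a = (norm u)^2 + (norm a)^2 + c * (\<Sum>i<I. (blinfun_apply (\<psi> i) u - obs i)^2)" for u :: 'u and a :: 'a
  define Ci where "Ci u a = ((\<forall>m<MO. Pop u a (xs m) = f (xs m)) \<and> (\<forall>m. MO \<le> m \<and> m < M \<longrightarrow> Bop u a (xs m) = g (xs m)))" for u a
  define Jf where "Jf z zt = qform N0 Ti z + qform Nt Tti zt + c * D z" for z zt
  define CF where "CF z zt = (\<forall>m<M. Fmap P B Q Qb J M MO (\<lambda>k. z (I + k)) zt m = ydata f g xs MO m)" for z zt
  define Cf where "Cf z zt = ((\<forall>n. N0 \<le> n \<longrightarrow> z n = 0) \<and> (\<forall>n. Nt \<le> n \<longrightarrow> zt n = 0) \<and> CF z zt)" for z zt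
  have ThK: "invertible_sq N0 (gram K v)" using \<Theta>_inv unfolding N0_def v_def .
  have ThS: "invertible_sq Nt (gram S vt)" using \<Theta>t_inv unfolding Nt_def vt_def .
  note gK = gamblet_core[OF K_bij K_sym normU ThK]
  note gS = gamblet_core[OF S_bij S_sym normA ThS]

  have phi_apply: "I + off Qb M MO q + m < N0 \<and> blinfun_apply (v (I + off Qb M MO q + m)) u = L q u (xs m)"
    if "q < Q" "m < blk Qb M MO q" for q m u
  proof -
    have ix: "off Qb M MO q + m < Ncount Q Qb M MO"
      using blocks_bound[of q Q m "blk Qb M MO", OF that] blk_sum[where Q=Q and Qb=Qb and M=M and MO=MO] Qb_le
      unfolding off_def Ncount_def by (auto simp add: min_def mult.commute split: if_splits)
    have vv: "v (I + off Qb M MO q + m) = coll_phi L xs q m"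
      unfolding v_def varphi_def phi_vec_def off_def
      using blocks_nth[of q Q m "blk Qb M MO" "coll_phi L xs", OF that] by simp
    have bl: "bounded_linear (\<lambda>u. L q u (xs m))"
    proof (cases "m < MO")
      case True
      then have x: "xs m \<in> \<Omega>" using xs_int by blast
      have "(\<forall>x\<in>\<Omega>. linear (\<lambda>u. L q u x)) \<and> (\<exists>C. \<forall>u. \<forall>x\<in>\<Omega>. \<bar>L q u x\<bar> \<le> C * norm u)"
        using L_Omega that(1) by blast
      then obtain C where "linear (\<lambda>u. L q u (xs m))" "\<forall>u. \<bar>L q u (xs m)\<bar> \<le> C * norm u"
        using x by blast
      then show ?thesis using bl_from by blast
    next
      case False
      then have "q < Qb" "m < M" using that unfolding blk_def by (auto split: if_splits)
      then have x: "xs m \<in> frontier \<Omega>" using xs_bd False by auto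
      have "(\<forall>x\<in>frontier \<Omega>. linear (\<lambda>u. L q u x)) \<and> (\<exists>C. \<forall>u. \<forall>x\<in>frontier \<Omega>. \<bar>L q u x\<bar> \<le> C * norm u)"
        using L_bdry \<open>q < Qb\<close> by blast
      then obtain C where "linear (\<lambda>u. L q u (xs m))" "\<forall>u. \<bar>L q u (xs m)\<bar> \<le> C * norm u"
        using x by blast
      then show ?thesis using bl_from by blast
    qed
    show ?thesis using ix vv bl unfolding N0_def coll_phi_def by (simp add: bounded_linear_Blinfun_apply)
  qed

  have phit_apply: "j * M + m < Nt \<and> blinfun_apply (vt (j * M + m)) a = Lt j a (xs m)"
    if "j < J" "m < M" for j m a
  proof -
    have "j * M + m < Suc j * M" using that by simp
    also have "\<dots> \<le> J * M" using that by (intro mult_le_mono1) simp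
    finally have ix: "j * M + m < Nt" unfolding Nt_def by (simp add: mult.commute)
    have vv: "vt (j * M + m) = coll_phi Lt xs j m"
      unfolding vt_def phit_vec_def
      using blocks_nth[of j J m "\<lambda>_. M" "coll_phi Lt xs", OF that] by (simp add: mult.commute)
    have x: "xs m \<in> closure \<Omega>"
    proof (cases "m < MO")
      case True then show ?thesis using xs_int closure_subset by blast
    next
      case False then show ?thesis using xs_bd that(2) unfolding frontier_def by auto
    qed
    have "(\<forall>x\<in>closure \<Omega>. linear (\<lambda>a. Lt j a x)) \<and> (\<exists>C. \<forall>a. \<forall>x\<in>closure \<Omega>. \<bar>Lt j a x\<bar> \<le> C * norm a)"
      using Lt_cl that(1) by blast
    then obtain C where "linear (\<lambda>a. Lt j a (xs m))" "\<forall>a. \<bar>Lt j a (xs m)\<bar> \<le> C * norm a"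
      using x by blast
    then have bl: "bounded_linear (\<lambda>a. Lt j a (xs m))" using bl_from by blast
    show ?thesis using ix vv bl unfolding coll_phi_def by (simp add: bounded_linear_Blinfun_apply)
  qed

  have data: "(\<Sum>i<I. (blinfun_apply (\<psi> i) u - obs i)^2) = D z"
    if "\<forall>n<N0. z n = blinfun_apply (v n) u" for z u
    unfolding D_def using that by (intro sum.cong) (auto simp: v_def varphi_def N0_def)

  have cons: "Ci u a \<longleftrightarrow> CF z zt"
    if hz: "\<forall>n<N0. z n = blinfun_apply (v n) u" and hzt: "\<forall>n<Nt. zt n = blinfun_apply (vt n) a" for z zt u a
  proof -
    have fm: "Fmap P B Q Qb J M MO (\<lambda>k. z (I + k)) zt m = (if m < MO then Pop u a (xs m) else Bop u a (xs m))"
      if "m < M" for m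
    proof -
      have tt: "map (\<lambda>j. zt (j * M + m)) [0..<J] = map (\<lambda>j. Lt j a (xs m)) [0..<J]"
      proof (rule map_cong[OF refl])
        fix j assume "j \<in> set [0..<J]"
        then have "j < J" by simp
        then show "zt (j * M + m) = Lt j a (xs m)" using phit_apply[OF _ that] hzt by metis
      qed
      show ?thesis
      proof (cases "m < MO")
        case True
        have "map (\<lambda>q. z (I + (off Qb M MO q + m))) [0..<Q] = map (\<lambda>q. L q u (xs m)) [0..<Q]"
        proof (rule map_cong[OF refl])
          fix q assume "q \<in> set [0..<Q]"
          then have q: "q < Q" by simp
          have "m < blk Qb M MO q" using True MO_le by (simp add: blk_def)
          then show "z (I + (off Qb M MO q + m)) = L q u (xs m)"
            using phi_apply[OF q] hz by (metis add.assoc)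
        qed
        then show ?thesis using True Pop_eq xs_int tt unfolding Fmap_def by (simp del: map_eq_conv)
      next
        case False
        have "map (\<lambda>q. z (I + (off Qb M MO q + m))) [0..<Qb] = map (\<lambda>q. L q u (xs m)) [0..<Qb]"
        proof (rule map_cong[OF refl])
          fix q assume "q \<in> set [0..<Qb]"
          then have q: "q < Qb" by simp
          then have q': "q < Q" using Qb_le by simp
          have "m < blk Qb M MO q" using q that by (simp add: blk_def)
          then show "z (I + (off Qb M MO q + m)) = L q u (xs m)"
            using phi_apply[OF q'] hz by (metis add.assoc)
        qed
        moreover have "xs m \<in> frontier \<Omega>" using xs_bd False that by auto
        ultimately show ?thesis using False Bop_eq tt unfolding Fmap_def by (simp del: map_eq_conv)
      qed
    qed
    have "CF z zt \<longleftrightarrow> (\<forall>m<M. (if m < MO then Pop u a (xs m) else Bop u a (xs m)) = (if m < MO then f (xs m) else g (xs m)))"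
      unfolding CF_def ydata_def using fm by auto
    also have "\<dots> \<longleftrightarrow> Ci u a" unfolding Ci_def using MO_le by force
    finally show ?thesis by simp
  qed

  have measrec: "blinfun_apply (v i) (rec z) = z i" if "i < N0" for i z
    using gK(1)[OF that] unfolding rec_def .
  have measrecT: "blinfun_apply (vt i) (recT z) = z i" if "i < Nt" for i z
    using gS(1)[OF that] unfolding recT_def .
  have normrec: "(norm (rec z))^2 = qform N0 Ti z" for z
    using gK(2) unfolding rec_def Ti_def .
  have normrecT: "(norm (recT z))^2 = qform Nt Tti z" for z
    using gS(2) unfolding recT_def Tti_def .
  have recmeas: "rec (meas u) = (\<Sum>n<N0. blinfun_apply (v n) u *\<^sub>R gamblet N0 K v n)" for u
    unfolding rec_def meas_def by (intro sum.cong) auto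
  have recmeasT: "recT (measT a) = (\<Sum>n<Nt. blinfun_apply (vt n) a *\<^sub>R gamblet Nt S vt n)" for a
    unfolding recT_def measT_def by (intro sum.cong) auto
  have decomp: "(norm u)^2 = qform N0 Ti (meas u) + (norm (u - rec (meas u)))^2" for u
    using gK(3)[of u] normrec[of "meas u"] recmeas[of u] by simp
  have decompT: "(norm a)^2 = qform Nt Tti (measT a) + (norm (a - recT (measT a)))^2" for a
    using gS(3)[of a] normrecT[of "measT a"] recmeasT[of a] by simp

  have eqA: "Ji u a = Jf (meas u) (measT a) + (norm (u - rec (meas u)))^2 + (norm (a - recT (measT a)))^2" for u :: 'u and a :: 'a
  proof -
    have "(\<Sum>i<I. (blinfun_apply (\<psi> i) u - obs i)^2) = D (meas u)"
      by (rule data) (simp add: meas_def)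
    then show ?thesis unfolding Ji_def Jf_def using decomp[of u] decompT[of a] by simp
  qed
  have eqB: "Ji (rec z) (recT zt) = Jf z zt" for z zt
  proof -
    have "(\<Sum>i<I. (blinfun_apply (\<psi> i) (rec z) - obs i)^2) = D z"
      by (rule data) (simp add: measrec)
    then show ?thesis unfolding Ji_def Jf_def using normrec normrecT by simp
  qed
  have eqC: "Ci u a \<longleftrightarrow> Cf (meas u) (measT a)" for u :: 'u and a :: 'a
    using cons[of "meas u" u "measT a" a] unfolding Cf_def by (simp add: meas_def measT_def)
  have eqD: "Ci (rec z) (recT zt) \<longleftrightarrow> CF z zt" for z zt
    using cons[of z "rec z" zt "recT zt"] measrec measrecT by simp

  have key: "is_arg_min (\<lambda>(u, a). Ji u a) (\<lambda>(u, a). Ci u a) (ud, ad) \<longleftrightarrow>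
     (\<exists>zd ztd. is_arg_min (\<lambda>(z, zt). Jf z zt) (\<lambda>(z, zt). Cf z zt) (zd, ztd) \<and> ud = rec zd \<and> ad = recT ztd)"
    (is "?L \<longleftrightarrow> ?R")
  proof
    assume H: ?L
    then have Cud: "Ci ud ad" and minu: "\<And>u a. Ci u a \<Longrightarrow> \<not> Ji u a < Ji ud ad"
      unfolding argmin_pair by auto
    define zd where "zd = meas ud"
    define ztd where "ztd = measT ad"
    have Cz: "Cf zd ztd" using eqC Cud unfolding zd_def ztd_def by blast
    have Crec: "Ci (rec zd) (recT ztd)" using eqD Cz unfolding Cf_def by blast
    have le: "Ji ud ad \<le> Jf zd ztd" using minu[OF Crec] eqB by simp
    have Aeq: "Ji ud ad = Jf zd ztd + (norm (ud - rec zd))^2 + (norm (ad - recT ztd))^2"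
      using eqA unfolding zd_def ztd_def by simp
    have n1: "(norm (ud - rec zd))^2 = 0" and n2: "(norm (ad - recT ztd))^2 = 0"
      using le Aeq by (smt (verit) zero_le_power2)+
    have u: "ud = rec zd" using n1 by simp
    have a: "ad = recT ztd" using n2 by simp
    have Jeq: "Ji ud ad = Jf zd ztd" using Aeq n1 n2 by simp
    have "is_arg_min (\<lambda>(z, zt). Jf z zt) (\<lambda>(z, zt). Cf z zt) (zd, ztd)"
      unfolding argmin_pair
    proof (intro conjI allI impI)
      show "Cf zd ztd" by (rule Cz)
      fix z zt assume "Cf z zt"
      then have "Ci (rec z) (recT zt)" using eqD unfolding Cf_def by blast
      then have "\<not> Ji (rec z) (recT zt) < Ji ud ad" by (rule minu)
      then show "\<not> Jf z zt < Jf zd ztd" using eqB Jeq by simp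
    qed
    then show ?R using u a by blast
  next
    assume ?R
    then obtain zd ztd where H: "is_arg_min (\<lambda>(z, zt). Jf z zt) (\<lambda>(z, zt). Cf z zt) (zd, ztd)"
      and u: "ud = rec zd" and a: "ad = recT ztd" by blast
    then have Cz: "Cf zd ztd" and minz: "\<And>z zt. Cf z zt \<Longrightarrow> \<not> Jf z zt < Jf zd ztd"
      unfolding argmin_pair by auto
    show ?L unfolding argmin_pair
    proof (intro conjI allI impI)
      show "Ci ud ad" using eqD Cz unfolding u a Cf_def by blast
      fix x y assume "Ci x y"
      then have "Cf (meas x) (measT y)" using eqC by blast
      then have "\<not> Jf (meas x) (measT y) < Jf zd ztd" by (rule minz)
      moreover have "Jf (meas x) (measT y) \<le> Ji x y" using eqA[of x y] by simp
      ultimately show "\<not> Ji x y < Ji ud ad" using eqB u a by simp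
    qed
  qed
  show ?thesis using key
    unfolding Ji_def Ci_def Jf_def Cf_def CF_def D_def c_def rec_def recT_def Ti_def Tti_def N0_def Nt_def v_def vt_def
    by simp
qed

end
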